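(* There is an absolute constant $C$ such that for all positive integers $d$ and all $x\in\mathbb{R}$ with $|x|\le\sqrt d$, $$|r_d(x)|\le C\max\left\{\frac{|x|^3}{\sqrt d},\frac{|x|}{\sqrt d},\frac{x^2}{d},\frac1d\right\}.$$
   Context: The Hermite polynomials $(H_k)_{k\ge0}$ are the orthonormal polynomials for $\mathcal{N}(0,1)$ with $\deg H_k=k$ and positive leading coefficient (the probabilist's Hermite polynomials divided by $\sqrt{k!}$). The remainder $r_d(x)$ is defined by $$H_d(x)=\exp\!\left(\frac{x^2}{4}\right)\left(\frac{2}{\pi d}\right)^{1/4}\left(\sin\!\left[\frac{1-d}{2}\pi+\sqrt d\,x\right]+r_d(x)\right).$$ *)

theory Defs
  imports "HOL-Analysis.Analysis"
begin

fun hermite_prob :: "nat \<Rightarrow> real \<Rightarrow> real" where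
  "hermite_prob 0 x = 1"
| "hermite_prob (Suc 0) x = x"
| "hermite_prob (Suc (Suc k)) x = x * hermite_prob (Suc k) x - real (Suc k) * hermite_prob k x"

text \<open>Orthonormal Hermite polynomials for N(0,1): H_k = He_k / sqrt(k!).\<close>
definition hermite :: "nat \<Rightarrow> real \<Rightarrow> real" where
  "hermite k x = hermite_prob k x / sqrt (fact k)"

text \<open>The remainder r_d(x), defined by
  H_d(x) = exp(x^2/4) (2/(pi d))^(1/4) (sin((1-d)/2 pi + sqrt d x) + r_d(x)).\<close>
definition hermite_rem :: "nat \<Rightarrow> real \<Rightarrow> real" where
  "hermite_rem d x = hermite d x / (exp (x\<^sup>2 / 4) * (2 / (pi * real d)) powr (1/4))
      - sin ((1 - real d) / 2 * pi + sqrt (real d) * x)"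

end

theory Submission
  imports Defs
begin


lemma herm_rec: "hermite_prob (Suc n) x = x * hermite_prob n x - real n * hermite_prob (n - 1) x"
  by (cases n) auto

lemma herm_deriv: "(hermite_prob n has_real_derivative (real n * hermite_prob (n-1) x)) (at x)"
proof (induction n x rule: hermite_prob.induct)
  case (1 x) then show ?case by simp
next
  case (2 x) then show ?case by (simp add: DERIV_ident)
next
  case (3 k x)
  have e: "hermite_prob (Suc (Suc k)) = (\<lambda>x. x * hermite_prob (Suc k) x - real (Suc k) * hermite_prob k x)"
    by (rule ext) simp
  have "((\<lambda>x. x * hermite_prob (Suc k) x - real (Suc k) * hermite_prob k x) has_real_derivative
     (real (Suc (Suc k)) * hermite_prob (Suc (Suc k) - 1) x)) (at x)"
    using 3 by (auto intro!: derivative_eq_intros simp: herm_rec[of k x] algebra_simps)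
  then show ?case unfolding e by simp
qed

lemma herm0: "hermite_prob (2*m) 0 * (2^m * fact m) = (-1)^m * fact (2*m) \<and> hermite_prob (2*m+1) 0 = 0"
proof (induction m)
  case 0 then show ?case by simp
next
  case (Suc m)
  have a: "2 * Suc m = Suc (Suc (2*m))" by simp
  have b: "2 * Suc m + 1 = Suc (Suc (2*m+1))" by simp
  have f1: "fact (Suc (Suc (2*m))) = (2*real m+2)*(2*real m+1) * (fact (2*m) :: real)"
    by (simp add: algebra_simps)
  have f2: "fact (Suc m) = (real m+1) * (fact m :: real)" by simp
  have h: "hermite_prob (2*m) 0 * (2^m * fact m) = (-1)^m * fact (2*m)" using Suc.IH by simp
  have "hermite_prob (Suc (Suc (2*m))) 0 * (2^Suc m * fact (Suc m)) = - (2*real m + 1) * hermite_prob (2*m) 0 * (2^Suc m * fact (Suc m))" by (simp add: algebra_simps)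
  also have "\<dots> = - (2*real m + 1) * (2 * (real m + 1)) * (hermite_prob (2*m) 0 * (2^m * fact m))"
    unfolding f2 by (simp add: algebra_simps)
  also have "\<dots> = (-1)^(Suc m) * fact (Suc (Suc (2*m)))"
    unfolding h f1 by (simp add: algebra_simps)
  finally show ?case using Suc.IH unfolding a b by simp
qed




definition W :: "nat \<Rightarrow> real" where "W n = (\<Prod>k=1..n. (4*real k^2) / (4*real k^2 - 1))"
definition pc :: "nat \<Rightarrow> real" where "pc m = fact (2*m) / (4^m * (fact m)^2)"

lemma four_sq: "k \<ge> 1 \<Longrightarrow> 1 < 4 * real k ^2"
proof -
  assume "k \<ge> 1"
  then have "1 \<le> real k ^ 2" by (simp add: one_le_power)
  then show ?thesis by linarith
qed

lemma W_Suc: "W (Suc n) = W n * ((4*real (Suc n)^2) / (4*real (Suc n)^2 - 1))"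
  unfolding W_def by simp

lemma W_pos: "W n > 0"
  unfolding W_def using four_sq by (intro prod_pos) (auto intro!: divide_pos_pos)

lemma alg1: "c > 0 \<Longrightarrow> f \<noteq> 0 \<Longrightarrow> q \<noteq> 0 \<Longrightarrow>
   ((2*c)*b*F)/((4*q)*(c*f)^2) = F/(q*f^2) * b / (2*c)" for c f q b F :: real
  by (simp add: field_simps power2_eq_square)

lemma pc_Suc: "pc (Suc m) = pc m * (2*real m+1) / (2*real (Suc m))"
proof -
  have f1: "fact (2 * Suc m) = (2*(real m+1))*(2*real m+1) * (fact (2*m) :: real)"
    by (simp add: algebra_simps)
  have f2: "fact (Suc m) = (real m+1) * (fact m :: real)" by simp
  have "pc (Suc m) = ((2*(real m+1))*(2*real m+1) * fact (2*m))/((4*4^m)*((real m+1)*fact m)^2)"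
    unfolding pc_def f1 f2 by simp
  also have "\<dots> = pc m * (2*real m+1) / (2*(real m + 1))"
    unfolding pc_def by (rule alg1) auto
  also have "\<dots> = pc m * (2*real m+1) / (2*real (Suc m))" by simp
  finally show ?thesis .
qed

lemma alg2: "a > 0 \<Longrightarrow> c > 0 \<Longrightarrow> P^2 * a * w = 1 \<Longrightarrow>
   (P * a / (2*c))^2 * (a+2) * (w * ((4*c^2) / (a * (a+2)))) = 1" for a c P w :: real
proof -
  assume h: "a > 0" "c > 0" "P^2 * a * w = 1"
  have nz: "a \<noteq> 0" "a + 2 \<noteq> 0" "c \<noteq> 0" using h by auto
  have "(P * a / (2*c))^2 * (a+2) * (w * ((4*c^2) / (a * (a+2)))) = (P^2 * a * w)"
    using nz by (simp add: divide_simps power2_eq_square)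
  then show ?thesis using h by simp
qed

lemma pc_W: "(pc m)^2 * (2*real m+1) * W m = 1"
proof (induction m)
  case 0 then show ?case by (simp add: pc_def W_def)
next
  case (Suc m)
  have d: "4*real (Suc m)^2 - 1 = (2*real m+1)*((2*real m+1)+2)" by (simp add: algebra_simps power2_eq_square)
  have e: "2*real (Suc m) + 1 = (2*real m+1)+2" by simp
  show ?case unfolding pc_Suc W_Suc d e
    by (rule alg2) (simp_all add: Suc.IH)
qed

lemma W_inc: "incseq W"
proof (rule incseq_SucI)
  fix n
  have p: "1 < 4*real (Suc n)^2" by (rule four_sq) simp
  have "1 \<le> (4*real (Suc n)^2) / (4*real (Suc n)^2 - 1)"
    using p by simp
  then show "W n \<le> W (Suc n)" unfolding W_Suc using W_pos[of n]
    by (metis mult_le_cancel_left1 order_less_imp_not_less)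
qed

lemma W_lim: "W \<longlonglongrightarrow> pi/2"
  unfolding W_def using wallis by simp

lemma W_le: "W n \<le> pi/2"
  using incseq_le[OF W_inc W_lim] .

definition U :: "nat \<Rightarrow> real" where "U m = W (Suc m) * (2*real m+3)/(2*real m+2)"

lemma alg3: "a > 0 \<Longrightarrow> w * (((a+2)^2) / ((a+1)*(a+3))) * (a + 3) / (a + 2)
    = (w * (a+1) / a) * (((a+2)*a)/((a+1)^2))" for a w :: real
proof -
  assume "a > 0"
  then have nz: "a \<noteq> 0" "a + 1 \<noteq> 0" "a + 2 \<noteq> 0" "a + 3 \<noteq> 0" by auto
  then show ?thesis by (simp add: divide_simps power2_eq_square)
qed

lemma le_helper: "(c::real) > 0 \<Longrightarrow> r \<le> 1 \<Longrightarrow> c * r \<le> c"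
  using mult_left_mono[of r 1 c] by simp

lemma U_dec: "decseq U"
proof (rule decseq_SucI)
  fix n
  define a where "a = 2*real n + 2"
  have a: "a > 0" unfolding a_def by simp
  have d0: "4*real (Suc (Suc n))^2 / (4*real (Suc (Suc n))^2 - 1) = (a+2)^2/((a+1)*(a+3))"
    unfolding a_def by (simp add: algebra_simps power2_eq_square)
  have d1: "U n = W (Suc n) * (a+1) / a" "U (Suc n) = W (Suc (Suc n)) * (a+3)/(a+2)"
    unfolding U_def a_def by (simp_all add: algebra_simps)
  have "U (Suc n) = U n * (((a+2)*a)/((a+1)^2))"
    unfolding d1 W_Suc[of "Suc n"] d0 using alg3[OF a] by simp
  moreover have "((a+2)*a)/((a+1)^2) \<le> 1"
  proof -
    have "(a+1)^2 > 0" using a by simp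
    moreover have "(a+2)*a \<le> (a+1)^2" by (simp add: power2_eq_square algebra_simps)
    ultimately show ?thesis by simp
  qed
  moreover have "U n > 0" unfolding U_def using W_pos by simp
  ultimately show "U (Suc n) \<le> U n"
    using le_helper[of "U n" "((a+2)*a)/((a+1)^2)"] by linarith
qed

lemma U_lim: "U \<longlonglongrightarrow> pi/2"
proof -
  have q: "(2*real m+3)/(2*real m+2) = 1 + inverse (real (Suc m)) / 2" for m
    by (simp add: field_simps)
  have "(\<lambda>m. 1 + inverse (real (Suc m)) / 2) \<longlonglongrightarrow> 1 + 0 / 2"
    by (intro tendsto_intros LIMSEQ_inverse_real_of_nat) auto
  then have l: "(\<lambda>m. (2*real m+3)/(2*real m+2)) \<longlonglongrightarrow> 1" unfolding q by simp
  have "(\<lambda>m. W (Suc m) * ((2*real m+3)/(2*real m+2))) \<longlonglongrightarrow> pi/2 * 1"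
    by (intro tendsto_mult l) (use W_lim LIMSEQ_Suc in blast)
  then show ?thesis unfolding U_def by (simp add: mult.assoc)
qed

lemma U_ge: "pi/2 \<le> U n"
  using decseq_ge[OF U_dec U_lim] .

lemma v4_bound:
  assumes "n = 2*m \<or> n = 2*m+1" "n \<ge> 1"
  shows "\<bar>(pc m)^2 * pi * real n / 2 - 1\<bar> \<le> 2 / real n"
proof -
  define a where "a = 2*real m + 1"
  have ap: "a > 0" unfolding a_def by simp
  have Wp: "W m > 0" by (rule W_pos)
  have e: "(pc m)^2 = 1 / (a * W m)" using pc_W[of m] Wp ap unfolding a_def[symmetric]
    by (simp add: field_simps)
  show ?thesis
  proof (cases "m = 0")
    case True
    then have "n = 1" using assms by auto
    then show ?thesis using True pi_gt3 pi_less_4 by (simp add: pc_def)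
  next
    case False
    then obtain k where k: "m = Suc k" by (cases m) auto
    have mp: "real m \<ge> 1" using k by simp
    have Ug: "pi/2 \<le> W m * a/(a - 1)" using U_ge[of k] unfolding U_def k a_def
      by (simp add: algebra_simps)
    have a1: "a - 1 > 0" using mp unfolding a_def by simp
    have Wl: "W m \<le> pi/2" by (rule W_le)
    from assms(1) show ?thesis
    proof
      assume n: "n = 2*m"
      have rn: "real n = a - 1" unfolding n a_def by simp
      have "(pc m)^2 * pi * real n / 2 = pi * (a-1) / (2 * a * W m)" unfolding e rn by simp
      moreover have "pi * (a-1) / (2 * a * W m) \<le> 1"
        using Ug Wp ap a1 by (simp add: field_simps)
      moreover have "pi * (a-1) / (2 * a * W m) \<ge> (a-1)/a"
      proof -
        have g1: "pi / (2 * W m) \<ge> 1" using Wl Wp by (simp add: field_simps)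
        have g2: "(a-1)/a \<ge> 0" using a1 ap by simp
        have "pi * (a-1) / (2 * a * W m) = (a-1)/a * (pi / (2 * W m))" by (simp add: mult_ac)
        also have "\<dots> \<ge> (a-1)/a * 1" using g1 g2 by (intro mult_left_mono) auto
        finally show ?thesis by simp
      qed
      moreover have "1 - (a-1)/a \<le> 2 / real n" using a1 ap unfolding rn by (simp add: field_simps)
      ultimately show ?thesis by linarith
    next
      assume n: "n = 2*m+1"
      have rn: "real n = a" unfolding n a_def by simp
      have "(pc m)^2 * pi * real n / 2 = pi / (2 * W m)" unfolding e rn using ap by simp
      moreover have "pi / (2 * W m) \<ge> 1" using Wl Wp by (simp add: field_simps)
      moreover have "pi / (2 * W m) \<le> a/(a-1)"
      proof -
        have "pi * (a-1) \<le> 2 * (W m * a)" using Ug a1 by (simp add: field_simps)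
        then show ?thesis using Wp a1 by (simp add: field_simps)
      qed
      moreover have "a/(a-1) - 1 \<le> 2 / real n" using a1 mp unfolding rn a_def by (simp add: field_simps)
      ultimately show ?thesis by linarith
    qed
  qed
qed




definition cst :: "nat \<Rightarrow> real" where "cst d = (2/(pi*real d)) powr (1/4)"
definition Ac :: "nat \<Rightarrow> real" where "Ac d = 1/(sqrt (fact d) * cst d)"
definition yy :: "nat \<Rightarrow> real \<Rightarrow> real" where "yy d x = Ac d * exp (- (x^2) / 4) * hermite_prob d x"
definition yp :: "nat \<Rightarrow> real \<Rightarrow> real" where
  "yp d x = Ac d * exp (- (x^2) / 4) * (real d * hermite_prob (d-1) x - x/2 * hermite_prob d x)"
definition th :: "nat \<Rightarrow> real" where "th d = (1 - real d)/2 * pi"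
definition ww :: "nat \<Rightarrow> real \<Rightarrow> real" where "ww d x = yy d x - sin (th d + sqrt (real d) * x)"
definition wp :: "nat \<Rightarrow> real \<Rightarrow> real" where "wp d x = yp d x - sqrt (real d) * cos (th d + sqrt (real d) * x)"
definition EE :: "nat \<Rightarrow> real \<Rightarrow> real" where "EE d x = (yp d x)^2 + (real d + 1/2 - x^2/4) * (yy d x)^2"
definition FF :: "nat \<Rightarrow> real \<Rightarrow> real" where "FF d x = (wp d x)^2 / real d + (ww d x)^2"

lemma cst_pos: "d \<ge> 1 \<Longrightarrow> cst d > 0"
  unfolding cst_def by simp

lemma rem_eq: "d \<ge> 1 \<Longrightarrow> hermite_rem d x = ww d x"
  using cst_pos[of d]
  unfolding hermite_rem_def ww_def yy_def Ac_def hermite_def cst_def[symmetric] th_def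
  by (simp add: exp_minus field_simps)

lemma yy_deriv: "(yy d has_real_derivative yp d x) (at x)"
proof -
  have "((\<lambda>x. Ac d * exp (- (x^2) / 4) * hermite_prob d x) has_real_derivative
     Ac d * (exp (- (x^2) / 4) * (- (2 * x) / 4)) * hermite_prob d x + Ac d * exp (- (x^2) / 4) * (real d * hermite_prob (d-1) x)) (at x)"
    by (auto intro!: derivative_eq_intros herm_deriv simp: field_simps)
  moreover have "Ac d * (exp (- (x^2) / 4) * (- (2 * x) / 4)) * hermite_prob d x + Ac d * exp (- (x^2) / 4) * (real d * hermite_prob (d-1) x) = yp d x"
    unfolding yp_def by (simp add: algebra_simps)
  ultimately show ?thesis unfolding yy_def[abs_def] by simp
qed

lemma alg_yp: "H0 = x*H1 - k*H2 \<Longrightarrow> A*(E*(-(2*x)/4))*(dd*H1 - x/2*H0) + A*E*(dd*(k*H2) - (1/2*H0 + x/2*(dd*H1))) = -(dd + 1/2 - x^2/4) * (A*E*H0)"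
  for H0 H1 H2 x k A E dd :: real
  by hypsubst (simp add: algebra_simps power2_eq_square)

lemma yp_deriv: assumes "d \<ge> 1" shows "(yp d has_real_derivative (-(real d + 1/2 - x^2/4) * yy d x)) (at x)"
proof -
  have "((\<lambda>x. Ac d * exp (- (x^2) / 4) * (real d * hermite_prob (d-1) x - x/2 * hermite_prob d x)) has_real_derivative
     Ac d * (exp (- (x^2) / 4) * (- (2 * x) / 4)) * (real d * hermite_prob (d-1) x - x/2 * hermite_prob d x)
     + Ac d * exp (- (x^2) / 4) * (real d * (real (d-1) * hermite_prob (d-1-1) x) - (1/2 * hermite_prob d x + x/2 * (real d * hermite_prob (d-1) x)))) (at x)"
    by (auto intro!: derivative_eq_intros herm_deriv simp: field_simps)
  moreover have "hermite_prob d x = x * hermite_prob (d-1) x - real (d-1) * hermite_prob (d-1-1) x"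
    using herm_rec[of "d-1" x] assms by simp
  then have "Ac d * (exp (- (x^2) / 4) * (- (2 * x) / 4)) * (real d * hermite_prob (d-1) x - x/2 * hermite_prob d x)
     + Ac d * exp (- (x^2) / 4) * (real d * (real (d-1) * hermite_prob (d-1-1) x) - (1/2 * hermite_prob d x + x/2 * (real d * hermite_prob (d-1) x)))
     = (-(real d + 1/2 - x^2/4) * yy d x)"
    unfolding yy_def by (rule alg_yp)
  ultimately show ?thesis unfolding yp_def[abs_def] by simp
qed





lemma ww_deriv: "(ww d has_real_derivative wp d x) (at x)"
  unfolding ww_def[abs_def] wp_def
  by (auto intro!: derivative_eq_intros yy_deriv simp: algebra_simps)

lemma wp_deriv: assumes "d \<ge> 1"
  shows "(wp d has_real_derivative (-(real d) * ww d x + (x^2/4 - 1/2) * yy d x)) (at x)"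
  unfolding wp_def[abs_def] ww_def
  by (auto intro!: derivative_eq_intros yp_deriv assms simp: algebra_simps)

lemma EE_deriv: assumes "d \<ge> 1"
  shows "(EE d has_real_derivative (-(x/2) * (yy d x)^2)) (at x)"
  unfolding EE_def[abs_def]
  by (auto intro!: derivative_eq_intros yp_deriv yy_deriv assms simp: algebra_simps power2_eq_square)




lemma FF_deriv: assumes "d \<ge> 1"
  shows "(FF d has_real_derivative (2 * wp d x * ((x^2/4 - 1/2) * yy d x) / real d)) (at x)"
proof -
  have dp: "real d \<noteq> 0" using assms by simp
  have h: "((\<lambda>x. (wp d x)^Suc 1 / real d + (ww d x)^Suc 1) has_real_derivative
    (1 + of_nat 1) * ((-(real d) * ww d x + (x^2/4 - 1/2) * yy d x) * (wp d x)^1) / real d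
     + (1 + of_nat 1) * (wp d x * (ww d x)^1)) (at x)"
    by (intro DERIV_add DERIV_cdivide DERIV_power_Suc wp_deriv ww_deriv assms)
  have e: "(1 + of_nat 1) * ((-(real d) * ww d x + (x^2/4 - 1/2) * yy d x) * (wp d x)^1) / real d
     + (1 + of_nat 1) * (wp d x * (ww d x)^1) = 2 * wp d x * ((x^2/4 - 1/2) * yy d x) / real d"
    using dp by (simp add: divide_simps) (simp add: algebra_simps)
  show ?thesis using h unfolding e FF_def[abs_def] by (simp add: numeral_2_eq_2)
qed




lemma EE_le: assumes "d \<ge> 1" shows "EE d x \<le> EE d 0"
proof (cases "x \<ge> 0")
  case True
  show ?thesis
  proof (rule DERIV_nonpos_imp_nonincreasing[OF True])
    fix t :: real assume "0 \<le> t"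
    moreover have "0 \<le> t/2 * (yy d t)^2" using \<open>0 \<le> t\<close> by simp
    ultimately show "\<exists>y. DERIV (EE d) t :> y \<and> y \<le> 0"
      using EE_deriv[OF assms, of t] by (intro exI[of _ "-(t/2) * (yy d t)^2"]) simp
  qed
next
  case False
  show ?thesis
  proof (rule DERIV_nonneg_imp_nondecreasing[of x 0])
    show "x \<le> 0" using False by simp
    fix t :: real assume "t \<le> 0"
    then have "0 \<le> -(t/2) * (yy d t)^2" by (simp add: mult_nonpos_nonneg)
    then show "\<exists>y. DERIV (EE d) t :> y \<and> y \<ge> 0"
      using EE_deriv[OF assms, of t] by (intro exI[of _ "-(t/2) * (yy d t)^2"]) simp
  qed
qed

lemma yy_bound: assumes "d \<ge> 1" "\<bar>x\<bar> \<le> sqrt (real d)" "EE d 0 \<le> B * real d"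
  shows "(yy d x)^2 \<le> 4*B/3"
proof -
  have x2: "x^2 \<le> real d" using assms(2)
  proof -
    have "\<bar>x\<bar>^2 \<le> (sqrt (real d))^2" using assms(2) by (intro power_mono) auto
    then show ?thesis by simp
  qed
  have k: "real d + 1/2 - x^2/4 \<ge> 3 * real d / 4" using x2 by simp
  have "(real d + 1/2 - x^2/4) * (yy d x)^2 \<le> EE d x" unfolding EE_def by simp
  also have "\<dots> \<le> B * real d" using EE_le[OF assms(1), of x] assms(3) by linarith
  finally have a: "(real d + 1/2 - x^2/4) * (yy d x)^2 \<le> B * real d" .
  have "3 * real d / 4 * (yy d x)^2 \<le> (real d + 1/2 - x^2/4) * (yy d x)^2"
    using k by (intro mult_right_mono) auto
  then have "3 * real d / 4 * (yy d x)^2 \<le> B * real d" using a by linarith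
  then show ?thesis using assms(1) by (simp add: field_simps)
qed





definition vv :: "nat \<Rightarrow> real" where
  "vv d = sqrt (fact (2*(d div 2))) / (2^(d div 2) * fact (d div 2) * cst d)"

lemma cst4: "d \<ge> 1 \<Longrightarrow> (cst d)^4 = 2/(pi*real d)"
  unfolding cst_def by (subst powr_power) auto

lemma vv_nonneg: "d \<ge> 1 \<Longrightarrow> vv d \<ge> 0"
  unfolding vv_def using cst_pos[of d] by simp

lemma vv4: assumes "d \<ge> 1" shows "(vv d)^4 = (pc (d div 2))^2 * pi * real d / 2"
proof -
  define m where "m = d div 2"
  define F :: real where "F = fact (2*m)"
  define f :: real where "f = fact m"
  have Fp: "F > 0" "f > 0" unfolding F_def f_def by auto
  have p: "(2::real)^(4*m) = 4^(2*m)" by (simp add: power_mult)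
  have s4: "(sqrt F)^4 = F^2"
  proof -
    have "(sqrt F)^4 = ((sqrt F)^2)^2" by simp
    then show ?thesis using Fp by simp
  qed
  have "(vv d)^4 = (sqrt F)^4 / (((2::real)^m)^4 * f^4 * (cst d)^4)"
    unfolding vv_def m_def[symmetric] F_def f_def by (simp add: power_divide power_mult_distrib)
  also have "\<dots> = F^2 / (((4::real)^m)^2 * f^4 * (2/(pi*real d)))"
    unfolding s4 cst4[OF assms] using p
    by (simp add: power_mult[symmetric] power_mult_distrib[symmetric] mult.commute[of m])
  also have "\<dots> = (F / ((4::real)^m * f^2))^2 * pi * real d / 2"
    using Fp assms p by (simp add: divide_simps power_mult_distrib)
  finally show ?thesis unfolding pc_def m_def[symmetric] F_def f_def .
qed

lemma vv_close: assumes "d \<ge> 1" shows "\<bar>vv d - 1\<bar> \<le> 2 / real d"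
proof -
  let ?v = "vv d"
  have v0: "?v \<ge> 0" using vv_nonneg[OF assms] .
  have b: "\<bar>?v^4 - 1\<bar> \<le> 2 / real d"
    unfolding vv4[OF assms] by (rule v4_bound) (use assms in auto)
  have "?v^4 - 1 = (?v - 1) * ((?v + 1) * (?v^2 + 1))" by (simp add: algebra_simps power2_eq_square power4_eq_xxxx)
  then have "\<bar>?v^4 - 1\<bar> = \<bar>?v - 1\<bar> * ((?v + 1) * (?v^2 + 1))" using v0 by (simp add: abs_mult)
  moreover have "(?v + 1) * (?v^2 + 1) \<ge> 1 * 1" using v0
    by (intro mult_mono) auto
  ultimately have "\<bar>?v - 1\<bar> \<le> \<bar>?v^4 - 1\<bar>"
    by (metis abs_ge_zero mult_left_mono mult_1_right)
  then show ?thesis using b by linarith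
qed




lemma at0: assumes "d \<ge> 1"
  shows "FF d 0 = (vv d - 1)^2 \<and> EE d 0 \<le> (real d + 1/2) * (vv d)^2"
proof -
  define m where "m = d div 2"
  define Fm :: real where "Fm = fact (2*m)"
  define f :: real where "f = fact m"
  have Fp: "Fm > 0" "f > 0" unfolding Fm_def f_def by auto
  have cp: "cst d > 0" using cst_pos[OF assms] .
  have H: "hermite_prob (2*m) 0 = (-1)^m * Fm / (2^m * f)"
    using conjunct1[OF herm0[of m]] Fp unfolding Fm_def[symmetric] f_def[symmetric]
    by (simp add: field_simps)
  have vvd: "vv d = sqrt Fm / (2^m * f * cst d)" unfolding vv_def m_def Fm_def f_def ..
  have sq1: "((-1::real)^m)^2 = 1" by (simp add: power_mult[symmetric] mult.commute[of m])
  have dc: "d = 2*m \<or> d = 2*m+1" unfolding m_def by auto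
  then show ?thesis
  proof
    assume d: "d = 2*m"
    then have m1: "m \<ge> 1" using assms by simp
    have H1: "hermite_prob (d-1) 0 = 0"
    proof -
      have "d - 1 = 2*(m-1)+1" using d m1 by simp
      then show ?thesis using herm0[of "m-1"] by simp
    qed
    have y0: "yy d 0 = (-1)^m * vv d"
    proof -
      have "yy d 0 = (-1)^m * (Fm / sqrt Fm) / (2^m * f * cst d)"
        unfolding yy_def Ac_def d H Fm_def[symmetric] by (simp add: field_simps)
      also have "\<dots> = (-1)^m * vv d" unfolding vvd using Fp by (simp add: real_div_sqrt)
      finally show ?thesis .
    qed
    have yp0: "yp d 0 = 0" unfolding yp_def H1 by simp
    have th: "th d = pi/2 - real m * pi" unfolding th_def d by (simp add: field_simps)
    have s: "sin (th d) = (-1)^m" "cos (th d) = 0"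
      unfolding th by (simp_all add: sin_diff cos_diff)
    have "ww d 0 = (-1)^m * (vv d - 1)" unfolding ww_def y0 using s by (simp add: algebra_simps)
    moreover have "wp d 0 = 0" unfolding wp_def yp0 using s by simp
    ultimately have "FF d 0 = (vv d - 1)^2" unfolding FF_def using sq1
      by (simp add: power_mult_distrib)
    moreover have "EE d 0 = (real d + 1/2) * (vv d)^2" unfolding EE_def yp0 y0 using sq1
      by (simp add: power_mult_distrib)
    ultimately show ?thesis by simp
  next
    assume d: "d = 2*m+1"
    have y0: "yy d 0 = 0" unfolding yy_def d using herm0[of m] by simp
    have fd: "sqrt (fact d) = sqrt (real d) * sqrt Fm" unfolding d Fm_def
      by (simp add: real_sqrt_mult[symmetric] algebra_simps)
    have yp0: "yp d 0 = sqrt (real d) * ((-1)^m * vv d)"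
    proof -
      have "yp d 0 = (real d / sqrt (real d)) * ((-1)^m * (Fm / sqrt Fm) / (2^m * f * cst d))"
        unfolding yp_def Ac_def fd using H unfolding d by (simp add: field_simps)
      also have "\<dots> = sqrt (real d) * ((-1)^m * vv d)" unfolding vvd using Fp
        by (simp add: real_div_sqrt)
      finally show ?thesis .
    qed
    have th: "th d = - (real m * pi)" unfolding th_def d by (simp add: field_simps)
    have s: "sin (th d) = 0" "cos (th d) = (-1)^m"
      unfolding th by simp_all
    have "ww d 0 = 0" unfolding ww_def y0 using s by simp
    moreover have "wp d 0 = sqrt (real d) * ((-1)^m * (vv d - 1))" unfolding wp_def yp0 using s
      by (simp add: algebra_simps)
    ultimately have "FF d 0 = (vv d - 1)^2" unfolding FF_def using sq1 assms
      by (simp add: power_mult_distrib)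
    moreover have "EE d 0 = real d * (vv d)^2" unfolding EE_def yp0 y0 using sq1
      by (simp add: power_mult_distrib)
    ultimately show ?thesis by (simp add: mult_right_mono)
  qed
qed




lemma abs_mono:
  fixes S P S' P' :: "real \<Rightarrow> real"
  assumes "a \<le> b"
    and "\<And>t. a \<le> t \<Longrightarrow> t \<le> b \<Longrightarrow> (S has_real_derivative S' t) (at t) \<and> (P has_real_derivative P' t) (at t) \<and> \<bar>S' t\<bar> \<le> P' t"
  shows "\<bar>S b - S a\<bar> \<le> P b - P a"
proof -
  have 1: "(\<lambda>t. P t - S t) a \<le> (\<lambda>t. P t - S t) b"
  proof (rule DERIV_nonneg_imp_nondecreasing[OF assms(1)])
    fix t assume "a \<le> t" "t \<le> b"
    with assms(2)[of t] show "\<exists>y. ((\<lambda>t. P t - S t) has_real_derivative y) (at t) \<and> y \<ge> 0"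
      by (intro exI[of _ "P' t - S' t"]) (auto intro!: DERIV_diff)
  qed
  have 2: "(\<lambda>t. P t + S t) a \<le> (\<lambda>t. P t + S t) b"
  proof (rule DERIV_nonneg_imp_nondecreasing[OF assms(1)])
    fix t assume "a \<le> t" "t \<le> b"
    with assms(2)[of t] show "\<exists>y. ((\<lambda>t. P t + S t) has_real_derivative y) (at t) \<and> y \<ge> 0"
      by (intro exI[of _ "P' t + S' t"]) (auto intro!: DERIV_add)
  qed
  from 1 2 show ?thesis by simp
qed

lemma pw:
  fixes D S w q y :: real
  assumes "D > 0" "S > 0" "w^2 / D \<le> S^2" "\<bar>y\<bar> \<le> 5"
  shows "\<bar>inverse S / 2 * (2 * w * (q * y) / D)\<bar> \<le> 5 * \<bar>q\<bar> / sqrt D"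
proof -
  have "w^2 \<le> D * S^2" using assms by (simp add: field_simps)
  then have "sqrt (w^2) \<le> sqrt (D * S^2)" by (rule real_sqrt_le_mono)
  then have w: "\<bar>w\<bar> \<le> sqrt D * S" using assms by (simp add: real_sqrt_mult)
  have "\<bar>inverse S / 2 * (2 * w * (q * y) / D)\<bar> = (\<bar>w\<bar> * (\<bar>q\<bar> * \<bar>y\<bar>)) / (S * D)"
    using assms by (simp add: abs_mult field_simps)
  also have "\<dots> \<le> ((sqrt D * S) * (\<bar>q\<bar> * 5)) / (S * D)"
    using assms w by (intro divide_right_mono mult_mono) auto
  also have "\<dots> = 5 * \<bar>q\<bar> * (sqrt D / D)" using assms by (simp add: field_simps)
  also have "sqrt D / D = 1 / sqrt D" using assms
  proof -
    have "sqrt D * sqrt D = D" using assms by simp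
    moreover have "sqrt D > 0" using assms by simp
    ultimately show ?thesis by (metis divide_divide_eq_right div_self less_irrefl nonzero_mult_div_cancel_left)
  qed
  finally show ?thesis by simp
qed

lemma yy_le5: assumes "d \<ge> 1" "\<bar>t\<bar> \<le> sqrt (real d)" shows "\<bar>yy d t\<bar> \<le> 5"
proof -
  have v: "vv d \<le> 3" using vv_close[OF assms(1)] assms(1)
  proof -
    have "2 / real d \<le> 2" using assms(1) by (simp add: field_simps)
    then show ?thesis using vv_close[OF assms(1)] by linarith
  qed
  have "(vv d)^2 \<le> 3^2" using v vv_nonneg[OF assms(1)] by (intro power_mono) auto
  then have "(real d + 1/2) * (vv d)^2 \<le> (real d + 1/2) * 9" by (intro mult_left_mono) auto
  also have "\<dots> \<le> 14 * real d" using assms(1) by simp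
  finally have "EE d 0 \<le> 14 * real d" using at0[OF assms(1)] by linarith
  then have "(yy d t)^2 \<le> 4 * 14 / 3" using yy_bound[OF assms] by blast
  then have "(yy d t)^2 \<le> 5^2" by simp
  then show ?thesis using abs_le_square_iff[of "yy d t" 5] by simp
qed




lemma FF_nonneg: "FF d t \<ge> 0" unfolding FF_def by simp

lemma S_bound: assumes "d \<ge> 1" "\<bar>x\<bar> \<le> sqrt (real d)" "\<epsilon> > 0"
  shows "sqrt (FF d x + \<epsilon>) \<le> sqrt (FF d 0 + \<epsilon>) + 5 * (\<bar>x\<bar>^3/12 + \<bar>x\<bar>/2) / sqrt (real d)"
proof -
  define S where "S t = sqrt (FF d t + \<epsilon>)" for t
  define c where "c = 5 / sqrt (real d)"
  define P where "P t = c * (t^3/12 + t/2)" for t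
  define S' where "S' t = inverse (sqrt (FF d t + \<epsilon>)) / 2 * (2 * wp d t * ((t^2/4 - 1/2) * yy d t) / real d)" for t
  define P' where "P' t = c * (t^2/4 + 1/2)" for t
  have dp: "real d > 0" using assms by simp
  have key: "(S has_real_derivative S' t) (at t) \<and> (P has_real_derivative P' t) (at t) \<and> \<bar>S' t\<bar> \<le> P' t"
    if t: "\<bar>t\<bar> \<le> sqrt (real d)" for t
  proof (intro conjI)
    have pos: "FF d t + \<epsilon> > 0" using FF_nonneg[of d t] assms(3) by linarith
    have i: "((\<lambda>t. FF d t + \<epsilon>) has_real_derivative (2 * wp d t * ((t^2/4 - 1/2) * yy d t) / real d + 0)) (at t)"
      by (intro DERIV_add FF_deriv assms(1) DERIV_const)
    show "(S has_real_derivative S' t) (at t)"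
      unfolding S_def[abs_def] S'_def using DERIV_chain2[OF DERIV_real_sqrt[OF pos] i] by simp
    show "(P has_real_derivative P' t) (at t)"
      unfolding P_def[abs_def] P'_def
      by (auto intro!: derivative_eq_intros simp: field_simps power2_eq_square)
    have "\<bar>S' t\<bar> \<le> 5 * \<bar>t^2/4 - 1/2\<bar> / sqrt (real d)"
      unfolding S'_def
    proof (rule pw[OF dp])
      show "sqrt (FF d t + \<epsilon>) > 0" using pos by simp
      show "(wp d t)^2 / real d \<le> (sqrt (FF d t + \<epsilon>))^2" using pos assms(3)
        unfolding FF_def by simp
      show "\<bar>yy d t\<bar> \<le> 5" by (rule yy_le5[OF assms(1) t])
    qed
    also have "\<dots> = c * \<bar>t^2/4 - 1/2\<bar>" unfolding c_def by simp
    also have "\<dots> \<le> P' t"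
    proof -
      have "\<bar>t^2/4 - 1/2\<bar> \<le> t^2/4 + 1/2" using zero_le_power2[of t] by (simp add: abs_le_iff)
      then show ?thesis unfolding P'_def c_def using dp by (intro mult_left_mono) auto
    qed
    finally show "\<bar>S' t\<bar> \<le> P' t" .
  qed
  show ?thesis
  proof (cases "x \<ge> 0")
    case True
    have "\<bar>S x - S 0\<bar> \<le> P x - P 0"
      by (rule abs_mono[of 0 x S S' P P']) (use key assms(2) True in auto)
    then show ?thesis unfolding S_def P_def c_def using True by simp
  next
    case False
    have "\<bar>S 0 - S x\<bar> \<le> P 0 - P x"
      by (rule abs_mono[of x 0 S S' P P']) (use key assms(2) False in auto)
    moreover have "\<bar>x\<bar>^3 = - (x^3)" using False by (simp add: power3_eq_cube)
    then have "P 0 - P x = 5 * (\<bar>x\<bar>^3/12 + \<bar>x\<bar>/2) / sqrt (real d)"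
      unfolding P_def c_def using False by (simp add: divide_simps)
    ultimately show ?thesis unfolding S_def by linarith
  qed
qed

theorem lemmaA6:
  shows "\<exists>C::real. \<forall>d::nat. \<forall>x::real. d \<ge> 1 \<longrightarrow> \<bar>x\<bar> \<le> sqrt (real d) \<longrightarrow>
    \<bar>hermite_rem d x\<bar> \<le> C * Max {\<bar>x\<bar> ^ 3 / sqrt (real d), \<bar>x\<bar> / sqrt (real d), x\<^sup>2 / real d, 1 / real d}"
proof (intro exI[of _ 6] allI impI)
  fix d :: nat and x :: real
  assume d: "d \<ge> 1" and x: "\<bar>x\<bar> \<le> sqrt (real d)"
  define M where "M = Max {\<bar>x\<bar> ^ 3 / sqrt (real d), \<bar>x\<bar> / sqrt (real d), x\<^sup>2 / real d, 1 / real d}"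
  have M1: "\<bar>x\<bar> ^ 3 / sqrt (real d) \<le> M" "\<bar>x\<bar> / sqrt (real d) \<le> M" "1 / real d \<le> M"
    unfolding M_def by auto
  define \<epsilon> where "\<epsilon> = 1 / (real d)^2"
  have dp: "real d > 0" using d by simp
  have ep: "\<epsilon> > 0" unfolding \<epsilon>_def using dp by simp
  have se: "sqrt \<epsilon> = 1 / real d" unfolding \<epsilon>_def using dp by (simp add: real_sqrt_divide)
  have "\<bar>hermite_rem d x\<bar> = \<bar>ww d x\<bar>" using rem_eq[OF d] by simp
  also have "\<dots> = sqrt ((ww d x)^2)" by simp
  also have "\<dots> \<le> sqrt (FF d x + \<epsilon>)" using ep unfolding FF_def
    by (intro real_sqrt_le_mono) simp
  also have "\<dots> \<le> sqrt (FF d 0 + \<epsilon>) + 5 * (\<bar>x\<bar>^3/12 + \<bar>x\<bar>/2) / sqrt (real d)"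
    by (rule S_bound[OF d x ep])
  also have "sqrt (FF d 0 + \<epsilon>) \<le> sqrt (FF d 0) + sqrt \<epsilon>"
    using FF_nonneg ep by (intro sqrt_add_le_add_sqrt) auto
  also have "sqrt (FF d 0) = \<bar>vv d - 1\<bar>" using at0[OF d] by simp
  also have "\<bar>vv d - 1\<bar> + sqrt \<epsilon> + 5 * (\<bar>x\<bar>^3/12 + \<bar>x\<bar>/2) / sqrt (real d)
      \<le> 3 * (1 / real d) + 5/12 * (\<bar>x\<bar>^3 / sqrt (real d)) + 5/2 * (\<bar>x\<bar> / sqrt (real d))"
  proof -
    have sp: "sqrt (real d) > 0" using dp by simp
    have e: "5 * (\<bar>x\<bar>^3/12 + \<bar>x\<bar>/2) / sqrt (real d) = 5/12 * (\<bar>x\<bar>^3 / sqrt (real d)) + 5/2 * (\<bar>x\<bar> / sqrt (real d))"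
      using sp by (simp add: field_simps)
    show ?thesis unfolding e se using vv_close[OF d] by simp
  qed
  also have "\<dots> \<le> 3 * M + 5/12 * M + 5/2 * M"
    using M1 by (intro add_mono mult_left_mono) auto
  also have "\<dots> \<le> 6 * M"
  proof -
    have "0 < 1 / real d" using dp by simp
    then have "0 \<le> M" using M1(3) by linarith
    then show ?thesis by linarith
  qed
  finally show "\<bar>hermite_rem d x\<bar> \<le> 6 * M" by simp
qed


end
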